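(* Let $D_+, D_-$ be a pair of SBP operators of order $q\ge1$ on $[a,b]$ with associated data $H,S,\mathbf{p}_0,\mathbf{p}_n,\mathbf{x}$, and let $\tilde D_+ = D_+ + H^{-1}\mathbf{p}_0\mathbf{p}_0^\top$. Let $(\lambda,\mathbf{w})$ be an eigenpair of $\tilde D_+$ (over $\mathbb{C}$) with $\operatorname{Re}(\lambda)=0$. Then $\lambda$ is a normal eigenvalue of $\tilde D_+$ with respect to the inner product $\langle \mathbf{f},\mathbf{g}\rangle = \mathbf{f}^* H\mathbf{g}$, i.e.: (a) every eigenvector of $\tilde D_+$ corresponding to $\lambda$ is $\langle\cdot,\cdot\rangle$-orthogonal to every eigenvector of $\tilde D_+$ corresponding to any eigenvalue $\mu\ne\lambda$; and (b) the algebraic multiplicity of $\lambda$ equals its geometric multiplicity.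
   Context: Let $[a,b]$ be an interval with $b>a$ and $n\ge 1$. For $\mathbf{x}\in\mathbb{R}^{n+1}$, $\mathbf{x}^j$ denotes elementwise exponentiation, with $\mathbf{x}^0=\mathbf{1}=(1,\dots,1)^\top$. Matrices $D_+, D_-\in\mathbb{R}^{(n+1)\times(n+1)}$ form a pair of SBP (summation-by-parts) operators of order $q\ge 1$ on $[a,b]$ if there exist matrices $H,S\in\mathbb{R}^{(n+1)\times(n+1)}$ and vectors $\mathbf{p}_0,\mathbf{p}_n,\mathbf{x}\in\mathbb{R}^{n+1}$ such that: (A) $D_\pm \mathbf{x}^j = j\mathbf{x}^{j-1}$, $\mathbf{p}_0^\top\mathbf{x}^j = a^j$, $\mathbf{p}_n^\top \mathbf{x}^j = b^j$ for $j=0,\dots,q$ (with $0\cdot\mathbf{x}^{-1}:=\mathbf{0}$); (B) $H=H^\top$ is positive definite; (C) $HD_+ + D_+^\top H = -\mathbf{p}_0\mathbf{p}_0^\top + \mathbf{p}_n\mathbf{p}_n^\top + S$ with $S=S^\top$ positive semidefinite; (D) $HD_+ + D_-^\top H = -\mathbf{p}_0\mathbf{p}_0^\top + \mathbf{p}_n\mathbf{p}_n^\top$; (E) $\mathbf{x}=(x_0,\dots,x_n)^\top$ with $x_i\ne x_j$ for $i\ne j$. The superscript $*$ denotes conjugate transpose. *)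

theory Defs
  imports "Jordan_Normal_Form.Jordan_Normal_Form_Uniqueness" "Jordan_Normal_Form.Conjugate"
begin

definition vpow :: "real vec \<Rightarrow> nat \<Rightarrow> real vec" where
  "vpow x j = vec (dim_vec x) (\<lambda>i. (x $ i) ^ j)"

definition outer :: "real vec \<Rightarrow> real vec \<Rightarrow> real mat" where
  "outer p r = mat (dim_vec p) (dim_vec r) (\<lambda>(i,j). p $ i * r $ j)"

definition SBP_pair ::
  "nat \<Rightarrow> nat \<Rightarrow> real \<Rightarrow> real \<Rightarrow> real mat \<Rightarrow> real mat \<Rightarrow> real mat \<Rightarrow> real mat
     \<Rightarrow> real vec \<Rightarrow> real vec \<Rightarrow> real vec \<Rightarrow> bool" where
  "SBP_pair n q a b Dp Dm H S p0 pn x \<longleftrightarrow>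
     Dp \<in> carrier_mat (n+1) (n+1) \<and> Dm \<in> carrier_mat (n+1) (n+1) \<and>
     H \<in> carrier_mat (n+1) (n+1) \<and> S \<in> carrier_mat (n+1) (n+1) \<and>
     p0 \<in> carrier_vec (n+1) \<and> pn \<in> carrier_vec (n+1) \<and> x \<in> carrier_vec (n+1) \<and>
     \<comment> \<open>(A)\<close>
     (\<forall>j\<le>q. Dp *\<^sub>v vpow x j = of_nat j \<cdot>\<^sub>v vpow x (j - 1) \<and>
             Dm *\<^sub>v vpow x j = of_nat j \<cdot>\<^sub>v vpow x (j - 1) \<and>
             p0 \<bullet> vpow x j = a ^ j \<and> pn \<bullet> vpow x j = b ^ j) \<and>
     \<comment> \<open>(B)\<close>
     H\<^sup>T = H \<and> (\<forall>v \<in> carrier_vec (n+1). v \<noteq> 0\<^sub>v (n+1) \<longrightarrow> v \<bullet> (H *\<^sub>v v) > 0) \<and>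
     \<comment> \<open>(C)\<close>
     H * Dp + Dp\<^sup>T * H = - outer p0 p0 + outer pn pn + S \<and>
     S\<^sup>T = S \<and> (\<forall>v \<in> carrier_vec (n+1). v \<bullet> (S *\<^sub>v v) \<ge> 0) \<and>
     \<comment> \<open>(D)\<close>
     H * Dp + Dm\<^sup>T * H = - outer p0 p0 + outer pn pn \<and>
     \<comment> \<open>(E)\<close>
     (\<forall>i<n+1. \<forall>j<n+1. i \<noteq> j \<longrightarrow> x $ i \<noteq> x $ j)"

abbreviation cmat :: "real mat \<Rightarrow> complex mat" where
  "cmat A \<equiv> map_mat complex_of_real A"

definition H_inner :: "real mat \<Rightarrow> complex vec \<Rightarrow> complex vec \<Rightarrow> complex" where
  "H_inner H f g = conjugate f \<bullet> (cmat H *\<^sub>v g)"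

definition alg_mult :: "complex mat \<Rightarrow> complex \<Rightarrow> nat" where
  "alg_mult A l = Polynomial.order l (char_poly A)"

definition geom_mult :: "complex mat \<Rightarrow> complex \<Rightarrow> nat" where
  "geom_mult A l = kernel_dim (char_matrix A l)"

end

theory Submission imports Defs "Jordan_Normal_Form.Jordan_Normal_Form_Existence" begin

lemma psd_null:
  fixes M :: "real mat" and r :: "real vec"
  assumes M: "M \<in> carrier_mat N N" and sym: "M\<^sup>T = M"
    and psd: "\<forall>v\<in>carrier_vec N. v \<bullet> (M *\<^sub>v v) \<ge> 0"
    and r: "r \<in> carrier_vec N" and z: "r \<bullet> (M *\<^sub>v r) = 0"
  shows "M *\<^sub>v r = 0\<^sub>v N"
proof -
  define y where "y = M *\<^sub>v r"
  have y: "y \<in> carrier_vec N" using M r unfolding y_def by auto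
  define Y where "Y = y \<bullet> y"
  define c where "c = y \<bullet> (M *\<^sub>v y)"
  have c0: "c \<ge> 0" using psd y unfolding c_def by auto
  have ry: "r \<bullet> (M *\<^sub>v y) = Y"
    using transpose_vec_mult_scalar[OF M y r] sym comm_scalar_prod[OF y r]
    unfolding Y_def y_def by simp
  have yr: "y \<bullet> (M *\<^sub>v r) = Y" unfolding Y_def y_def ..
  have expand: "(r + t \<cdot>\<^sub>v y) \<bullet> (M *\<^sub>v (r + t \<cdot>\<^sub>v y)) = 2*t*Y + t^2*c" for t
  proof -
    have My: "M *\<^sub>v y \<in> carrier_vec N" "M *\<^sub>v r \<in> carrier_vec N" using M y r by auto
    have "M *\<^sub>v (r + t \<cdot>\<^sub>v y) = M *\<^sub>v r + t \<cdot>\<^sub>v (M *\<^sub>v y)"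
      using M r y by (simp add: mult_add_distrib_mat_vec mult_mat_vec)
    hence "(r + t \<cdot>\<^sub>v y) \<bullet> (M *\<^sub>v (r + t \<cdot>\<^sub>v y))
       = r \<bullet> (M *\<^sub>v r) + t * (r \<bullet> (M *\<^sub>v y)) + t * (y \<bullet> (M *\<^sub>v r)) + t*t*(y \<bullet> (M *\<^sub>v y))"
      using r y My
      by (simp add: add_scalar_prod_distrib scalar_prod_add_distrib smult_scalar_prod_distrib
          scalar_prod_smult_distrib algebra_simps)
    thus ?thesis using z ry yr unfolding c_def by (simp add: power2_eq_square)
  qed
  define t where "t = - Y / (c + 1)"
  have "(r + t \<cdot>\<^sub>v y) \<bullet> (M *\<^sub>v (r + t \<cdot>\<^sub>v y)) \<ge> 0" using psd r y by auto
  hence ge: "2*t*Y + t^2*c \<ge> 0" using expand by simp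
  have Y0: "Y \<ge> 0" unfolding Y_def using y by (simp add: scalar_prod_def sum_nonneg)
  have "Y = 0"
  proof (rule ccontr)
    assume "Y \<noteq> 0"
    with Y0 have Yp: "Y > 0" by simp
    have c1: "c + 1 > 0" using c0 by simp
    have "(2*t*Y + t^2*c) * (c+1)^2 = -(Y^2 * (c + 2))"
    proof -
      have e1: "t * (c+1) = - Y" unfolding t_def using c1 by simp
      have "(2*t*Y + t^2*c) * (c+1)^2 = 2*Y*(t*(c+1))*(c+1) + (t*(c+1))^2*c"
        by (simp add: power2_eq_square algebra_simps)
      also have "\<dots> = -(Y^2 * (c + 2))" unfolding e1 by (simp add: power2_eq_square algebra_simps)
      finally show ?thesis .
    qed
    moreover have "-(Y^2 * (c + 2)) < 0" using Yp c0 by (simp add: mult_pos_pos)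
    moreover have "(2*t*Y + t^2*c) * (c+1)^2 \<ge> 0" using ge by simp
    ultimately show False by linarith
  qed
  hence "y = 0\<^sub>v N" using y conjugate_square_eq_0_vec[OF y] unfolding Y_def by simp
  thus ?thesis unfolding y_def .
qed

lemma cmat_mult_vec_index:
  fixes M :: "real mat" and v :: "complex vec"
  assumes M: "M \<in> carrier_mat N N" and v: "v \<in> carrier_vec N" and i: "i < N"
  shows "(cmat M *\<^sub>v v) $ i = complex_of_real ((M *\<^sub>v map_vec Re v) $ i)
          + \<i> * complex_of_real ((M *\<^sub>v map_vec Im v) $ i)"
  using M v i
  by (auto simp: mult_mat_vec_def scalar_prod_def complex_eq_iff Re_sum Im_sum)

lemma Re_quad:
  fixes M :: "real mat" and v :: "complex vec"
  assumes M: "M \<in> carrier_mat N N" and v: "v \<in> carrier_vec N"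
  shows "Re (conjugate v \<bullet> (cmat M *\<^sub>v v)) = map_vec Re v \<bullet> (M *\<^sub>v map_vec Re v) + map_vec Im v \<bullet> (M *\<^sub>v map_vec Im v)"
proof -
  have "Re (conjugate v \<bullet> (cmat M *\<^sub>v v)) = (\<Sum>i<N. Re (cnj (v $ i) * (cmat M *\<^sub>v v) $ i))"
    using M v by (simp add: scalar_prod_def Re_sum lessThan_atLeast0)
  also have "\<dots> = (\<Sum>i<N. Re (v $ i) * (M *\<^sub>v map_vec Re v) $ i + Im (v $ i) * (M *\<^sub>v map_vec Im v) $ i)"
    by (rule sum.cong, simp, simp add: cmat_mult_vec_index[OF M v])
  also have "\<dots> = map_vec Re v \<bullet> (M *\<^sub>v map_vec Re v) + map_vec Im v \<bullet> (M *\<^sub>v map_vec Im v)"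
    using M v by (simp add: scalar_prod_def sum.distrib lessThan_atLeast0)
  finally show ?thesis .
qed

lemma conj_cmat_mult:
  fixes M :: "real mat" and v :: "complex vec"
  assumes M: "M \<in> carrier_mat N N" and v: "v \<in> carrier_vec N"
  shows "conjugate (cmat M *\<^sub>v v) = cmat M *\<^sub>v conjugate v"
  using M v by (intro eq_vecI) (auto simp: mult_mat_vec_def scalar_prod_def cnj_sum)


lemma cmat_add: "X \<in> carrier_mat N N \<Longrightarrow> Y \<in> carrier_mat N N \<Longrightarrow> cmat (X + Y) = cmat X + cmat Y"
  by (intro eq_matI) auto

locale setting =
  fixes N :: nat and A H M :: "real mat" and lam :: complex
  assumes A: "A \<in> carrier_mat N N" and H: "H \<in> carrier_mat N N" and M: "M \<in> carrier_mat N N"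
    and Hsym: "H\<^sup>T = H" and Msym: "M\<^sup>T = M"
    and psd: "\<forall>v\<in>carrier_vec N. v \<bullet> (M *\<^sub>v v) \<ge> 0"
    and HM: "H * A + A\<^sup>T * H = M" and re0: "Re lam = 0"
begin

lemma Mc: "cmat M = cmat H * cmat A + (cmat A)\<^sup>T * cmat H"
proof -
  have "cmat M = cmat (H * A) + cmat (A\<^sup>T * H)" unfolding HM[symmetric]
    using A H by (intro cmat_add) auto
  also have "\<dots> = cmat H * cmat A + (cmat A)\<^sup>T * cmat H"
    using A H by (simp add: of_real_hom.mat_hom_mult[of _ N N _ N] map_mat_transpose)
  finally show ?thesis .
qed

lemma Mc_sym: "(cmat M)\<^sup>T = cmat M" using Msym by (simp add: map_mat_transpose)

lemma cnj_lam: "cnj lam = - lam" using re0 by (simp add: complex_eq_iff)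

lemma split_M:
  assumes v: "v \<in> carrier_vec N" and y: "y \<in> carrier_vec N"
  shows "conjugate v \<bullet> (cmat M *\<^sub>v y) = conjugate v \<bullet> (cmat H *\<^sub>v (cmat A *\<^sub>v y))
           + (cmat A *\<^sub>v conjugate v) \<bullet> (cmat H *\<^sub>v y)"
proof -
  have Ac: "cmat A \<in> carrier_mat N N" and Hc: "cmat H \<in> carrier_mat N N" using A H by auto
  have "cmat M *\<^sub>v y = cmat H *\<^sub>v (cmat A *\<^sub>v y) + (cmat A)\<^sup>T *\<^sub>v (cmat H *\<^sub>v y)"
    unfolding Mc using Ac Hc y
    by (simp add: add_mult_distrib_mat_vec[of _ N N] assoc_mult_mat_vec[of _ N N _ N])
  hence "conjugate v \<bullet> (cmat M *\<^sub>v y) = conjugate v \<bullet> (cmat H *\<^sub>v (cmat A *\<^sub>v y))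
           + conjugate v \<bullet> ((cmat A)\<^sup>T *\<^sub>v (cmat H *\<^sub>v y))"
    using Ac Hc y v by (simp add: scalar_prod_add_distrib[of _ N])
  also have "conjugate v \<bullet> ((cmat A)\<^sup>T *\<^sub>v (cmat H *\<^sub>v y)) = (cmat A *\<^sub>v conjugate v) \<bullet> (cmat H *\<^sub>v y)"
    using transpose_vec_mult_scalar[of "(cmat A)\<^sup>T" N N "cmat H *\<^sub>v y" "conjugate v"] Ac Hc y v
    by simp
  finally show ?thesis .
qed

lemma eig_null:
  assumes v: "v \<in> carrier_vec N" and ev: "cmat A *\<^sub>v v = lam \<cdot>\<^sub>v v"
  shows "cmat M *\<^sub>v v = 0\<^sub>v N"
proof -
  have Ac: "cmat A \<in> carrier_mat N N" and Hc: "cmat H \<in> carrier_mat N N" using A H by auto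
  have cv: "cmat A *\<^sub>v conjugate v = cnj lam \<cdot>\<^sub>v conjugate v"
    using conj_cmat_mult[OF A v] ev conjugate_smult_vec[of lam v] by simp
  have "conjugate v \<bullet> (cmat M *\<^sub>v v) = (lam + cnj lam) * (conjugate v \<bullet> (cmat H *\<^sub>v v))"
    unfolding split_M[OF v v] ev cv using v Hc
    by (simp add: mult_mat_vec[of _ N N] scalar_prod_smult_distrib[of _ N] smult_scalar_prod_distrib[of _ N] algebra_simps)
  also have "\<dots> = 0" using cnj_lam by simp
  finally have "Re (conjugate v \<bullet> (cmat M *\<^sub>v v)) = 0" by simp
  hence sum0: "map_vec Re v \<bullet> (M *\<^sub>v map_vec Re v) + map_vec Im v \<bullet> (M *\<^sub>v map_vec Im v) = 0"
    using Re_quad[OF M v] by simp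
  have rc: "map_vec Re v \<in> carrier_vec N" "map_vec Im v \<in> carrier_vec N" using v by auto
  have ge: "map_vec Re v \<bullet> (M *\<^sub>v map_vec Re v) \<ge> 0" "map_vec Im v \<bullet> (M *\<^sub>v map_vec Im v) \<ge> 0"
    using psd rc by auto
  have z1: "M *\<^sub>v map_vec Re v = 0\<^sub>v N"
    by (rule psd_null[OF M Msym psd rc(1)]) (use sum0 ge in linarith)
  have z2: "M *\<^sub>v map_vec Im v = 0\<^sub>v N"
    by (rule psd_null[OF M Msym psd rc(2)]) (use sum0 ge in linarith)
  show ?thesis
    by (rule eq_vecI) (use M v z1 z2 cmat_mult_vec_index[OF M v] in auto)
qed

lemma core:
  assumes v: "v \<in> carrier_vec N" and ev: "cmat A *\<^sub>v v = lam \<cdot>\<^sub>v v" and y: "y \<in> carrier_vec N"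
  shows "conjugate v \<bullet> (cmat H *\<^sub>v (cmat A *\<^sub>v y)) = lam * (conjugate v \<bullet> (cmat H *\<^sub>v y))"
proof -
  have Ac: "cmat A \<in> carrier_mat N N" and Hc: "cmat H \<in> carrier_mat N N" and Mcc: "cmat M \<in> carrier_mat N N"
    using A H M by auto
  have cv: "cmat A *\<^sub>v conjugate v = cnj lam \<cdot>\<^sub>v conjugate v"
    using conj_cmat_mult[OF A v] ev conjugate_smult_vec[of lam v] by simp
  have "conjugate v \<bullet> (cmat M *\<^sub>v y) = ((cmat M)\<^sup>T *\<^sub>v conjugate v) \<bullet> y"
    using transpose_vec_mult_scalar[OF Mcc y, of "conjugate v"] v by simp
  also have "\<dots> = 0" unfolding Mc_sym conj_cmat_mult[OF M v, symmetric] eig_null[OF v ev]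
    using y by simp
  finally have "0 = conjugate v \<bullet> (cmat H *\<^sub>v (cmat A *\<^sub>v y)) + cnj lam * (conjugate v \<bullet> (cmat H *\<^sub>v y))"
    unfolding split_M[OF v y] cv using v Hc y
    by (simp add: smult_scalar_prod_distrib[of _ N])
  thus ?thesis unfolding cnj_lam by (simp add: algebra_simps add_eq_0_iff)
qed

end


lemma mat_vec_zero: "(P :: 'a :: comm_ring_1 mat) \<in> carrier_mat N N \<Longrightarrow> P *\<^sub>v 0\<^sub>v N = 0\<^sub>v N"
  by (intro eq_vecI) (auto simp: mult_mat_vec_def scalar_prod_def)

lemma kernel_dim_eq: "mat_kernel X = mat_kernel (Y :: 'a :: field mat) \<Longrightarrow> dim_col X = dim_col Y \<Longrightarrow> kernel_dim X = kernel_dim Y"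
  unfolding kernel_dim_def by simp

context setting
begin

lemma orth:
  assumes v: "eigenvector (cmat A) v lam" and u: "eigenvector (cmat A) u mu" and ne: "mu \<noteq> lam"
  shows "conjugate v \<bullet> (cmat H *\<^sub>v u) = 0"
proof -
  have vc: "v \<in> carrier_vec N" and ev: "cmat A *\<^sub>v v = lam \<cdot>\<^sub>v v"
    using v A unfolding eigenvector_def by auto
  have uc: "u \<in> carrier_vec N" and eu: "cmat A *\<^sub>v u = mu \<cdot>\<^sub>v u"
    using u A unfolding eigenvector_def by auto
  have Hc: "cmat H \<in> carrier_mat N N" using H by auto
  have "mu * (conjugate v \<bullet> (cmat H *\<^sub>v u)) = lam * (conjugate v \<bullet> (cmat H *\<^sub>v u))"
    using core[OF vc ev uc] unfolding eu using Hc uc vc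
    by (simp add: mult_mat_vec[of _ N N] scalar_prod_smult_distrib[of _ N])
  thus ?thesis using ne by simp
qed

lemma char_mv:
  assumes w: "w \<in> carrier_vec N"
  shows "char_matrix (cmat A) lam *\<^sub>v w = cmat A *\<^sub>v w + (-lam) \<cdot>\<^sub>v w"
proof (rule eq_vecI)
  fix i assume "i < dim_vec (cmat A *\<^sub>v w + (-lam) \<cdot>\<^sub>v w)"
  hence i: "i < N" using A w by simp
  have "(\<Sum>ia = 0..<N. lam * (w $ ia * (if ia = i then 1 else 0))) = (\<Sum>ia = 0..<N. if ia = i then lam * w $ i else 0)"
    by (rule sum.cong) auto
  also have "\<dots> = lam * w $ i" using i by simp
  finally show "(char_matrix (cmat A) lam *\<^sub>v w) $ i = (cmat A *\<^sub>v w + (-lam) \<cdot>\<^sub>v w) $ i"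
    using A w i by (simp add: char_matrix_def mult_mat_vec_def scalar_prod_def sum_subtractf algebra_simps)
qed (use A w in \<open>simp add: char_matrix_def\<close>)

lemma no_chain:
  assumes Hpd: "\<forall>v \<in> carrier_vec N. v \<noteq> 0\<^sub>v N \<longrightarrow> v \<bullet> (H *\<^sub>v v) > 0"
    and y: "y \<in> carrier_vec N"
    and cc: "char_matrix (cmat A) lam *\<^sub>v (char_matrix (cmat A) lam *\<^sub>v y) = 0\<^sub>v N"
  shows "char_matrix (cmat A) lam *\<^sub>v y = 0\<^sub>v N"
proof -
  define z where "z = char_matrix (cmat A) lam *\<^sub>v y"
  have Ac: "cmat A \<in> carrier_mat N N" and Hc: "cmat H \<in> carrier_mat N N" using A H by auto
  have zc: "z \<in> carrier_vec N" unfolding z_def by (intro mult_mat_vec_carrier[of _ N N] char_matrix_closed Ac y)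
  have zd: "z = cmat A *\<^sub>v y + (-lam) \<cdot>\<^sub>v y" unfolding z_def by (rule char_mv[OF y])
  have "cmat A *\<^sub>v z + (-lam) \<cdot>\<^sub>v z = 0\<^sub>v N" using cc char_mv[OF zc] unfolding z_def by simp
  have ez: "cmat A *\<^sub>v z = lam \<cdot>\<^sub>v z"
  proof (rule eq_vecI)
    fix i assume "i < dim_vec (lam \<cdot>\<^sub>v z)"
    hence i: "i < N" using zc by simp
    have "(cmat A *\<^sub>v z + (-lam) \<cdot>\<^sub>v z) $ i = 0" using \<open>cmat A *\<^sub>v z + (-lam) \<cdot>\<^sub>v z = 0\<^sub>v N\<close> i by simp
    thus "(cmat A *\<^sub>v z) $ i = (lam \<cdot>\<^sub>v z) $ i" using i Ac zc by simp
  qed (use Ac zc in simp)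
  have "conjugate z \<bullet> (cmat H *\<^sub>v z) = conjugate z \<bullet> (cmat H *\<^sub>v (cmat A *\<^sub>v y))
       + (-lam) * (conjugate z \<bullet> (cmat H *\<^sub>v y))"
    unfolding zd[symmetric, THEN sym] using Hc Ac y zc
    by (simp add: mult_add_distrib_mat_vec[of _ N N] mult_mat_vec[of _ N N]
        scalar_prod_add_distrib[of _ N] scalar_prod_smult_distrib[of _ N])
  also have "\<dots> = 0" unfolding core[OF zc ez y] by simp
  finally have "Re (conjugate z \<bullet> (cmat H *\<^sub>v z)) = 0" by simp
  hence sum0: "map_vec Re z \<bullet> (H *\<^sub>v map_vec Re z) + map_vec Im z \<bullet> (H *\<^sub>v map_vec Im z) = 0"
    using Re_quad[OF H zc] by simp
  have rc: "map_vec Re z \<in> carrier_vec N" "map_vec Im z \<in> carrier_vec N" using zc by auto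
  have ge: "map_vec Re z \<bullet> (H *\<^sub>v map_vec Re z) \<ge> 0" "map_vec Im z \<bullet> (H *\<^sub>v map_vec Im z) \<ge> 0"
  proof -
    have "\<And>v. v \<in> carrier_vec N \<Longrightarrow> v \<bullet> (H *\<^sub>v v) \<ge> 0"
    proof -
      fix v :: "real vec" assume v: "v \<in> carrier_vec N"
      show "v \<bullet> (H *\<^sub>v v) \<ge> 0"
      proof (cases "v = 0\<^sub>v N")
        case True thus ?thesis using H by simp
      next
        case False thus ?thesis using Hpd v by force
      qed
    qed
    thus "map_vec Re z \<bullet> (H *\<^sub>v map_vec Re z) \<ge> 0" "map_vec Im z \<bullet> (H *\<^sub>v map_vec Im z) \<ge> 0"
      using rc by auto
  qed
  have "map_vec Re z = 0\<^sub>v N" using Hpd rc(1) sum0 ge by force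
  moreover have "map_vec Im z = 0\<^sub>v N" using Hpd rc(2) sum0 ge by force
  ultimately have "z = 0\<^sub>v N"
  proof (intro eq_vecI)
    fix i assume r0: "map_vec Re z = 0\<^sub>v N" and i0: "map_vec Im z = 0\<^sub>v N" and "i < dim_vec (0\<^sub>v N :: complex vec)"
    hence i: "i < N" by simp
    have "map_vec Re z $ i = 0" "map_vec Im z $ i = 0" using r0 i0 i by simp_all
    thus "z $ i = 0\<^sub>v N $ i" using i zc by (simp add: complex_eq_iff)
  qed (use zc in simp)
  thus ?thesis unfolding z_def .
qed


lemma mult_eq:
  assumes Hpd: "\<forall>v \<in> carrier_vec N. v \<noteq> 0\<^sub>v N \<longrightarrow> v \<bullet> (H *\<^sub>v v) > 0"
  shows "alg_mult (cmat A) lam = geom_mult (cmat A) lam"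
proof -
  define C where "C = char_matrix (cmat A) lam"
  have Ac: "cmat A \<in> carrier_mat N N" using A by auto
  have Cc: "C \<in> carrier_mat N N" unfolding C_def using Ac by auto
  have C1: "C ^\<^sub>m 1 = C" using Cc by simp
  have pow: "\<forall>y\<in>carrier_vec N. (C ^\<^sub>m Suc k) *\<^sub>v y = 0\<^sub>v N \<longrightarrow> C *\<^sub>v y = 0\<^sub>v N" for k
  proof (induction k)
    case 0
    then show ?case using C1 by simp
  next
    case (Suc k)
    show ?case
    proof (intro ballI impI)
      fix y :: "complex vec" assume y: "y \<in> carrier_vec N" and z: "(C ^\<^sub>m Suc (Suc k)) *\<^sub>v y = 0\<^sub>v N"
      have e: "C ^\<^sub>m Suc (Suc k) = (C ^\<^sub>m Suc k) * C" by (rule pow_mat.simps(2))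
      have "(C ^\<^sub>m Suc (Suc k)) *\<^sub>v y = (C ^\<^sub>m Suc k) *\<^sub>v (C *\<^sub>v y)"
        unfolding e using Cc y by (intro assoc_mult_mat_vec[of _ N N _ N]) auto
      hence "C *\<^sub>v (C *\<^sub>v y) = 0\<^sub>v N" using Suc z Cc y by auto
      thus "C *\<^sub>v y = 0\<^sub>v N" using no_chain[OF Hpd y] unfolding C_def by simp
    qed
  qed
  have ker: "mat_kernel (C ^\<^sub>m Suc k) = mat_kernel C" for k
  proof -
    have Pc: "C ^\<^sub>m Suc k \<in> carrier_mat N N" using Cc by auto
    have "C ^\<^sub>m Suc k *\<^sub>v y = 0\<^sub>v N" if y: "y \<in> carrier_vec N" "C *\<^sub>v y = 0\<^sub>v N" for y
    proof -
      have "C ^\<^sub>m Suc k *\<^sub>v y = C ^\<^sub>m k *\<^sub>v (C *\<^sub>v y)"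
        using Cc y by (simp add: assoc_mult_mat_vec[of _ N N _ N])
      moreover have "C ^\<^sub>m k \<in> carrier_mat N N" using Cc by simp
      ultimately show ?thesis using y by (simp add: mat_vec_zero)
    qed
    thus ?thesis unfolding mat_kernel[OF Pc] mat_kernel[OF Cc] using pow by blast
  qed
  have gk: "dim_gen_eigenspace (cmat A) lam (Suc k) = dim_gen_eigenspace (cmat A) lam 1" for k
    unfolding dim_gen_eigenspace_def C_def[symmetric]
    by (rule kernel_dim_eq) (use ker Cc C1 in auto)
  from char_poly_factorized[OF Ac] obtain as where "char_poly (cmat A) = (\<Prod>a\<leftarrow>as. [:- a, 1:])" by auto
  from jordan_nf_exists[OF Ac this] obtain n_as where jnf: "jordan_nf (cmat A) n_as" ..
  define K where "K = sum_list (map fst n_as)"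
  have "alg_mult (cmat A) lam = sum_list (map fst (filter (\<lambda> na. snd na = lam) n_as))"
    unfolding alg_mult_def by (rule jordan_nf_order[OF jnf])
  also have "\<dots> = (\<Sum> n \<leftarrow> map fst [(n, e)\<leftarrow>n_as . e = lam]. min (Suc K) n)"
  proof -
    have "map (min (Suc K)) (map fst [(n, e)\<leftarrow>n_as . e = lam]) = map fst [(n, e)\<leftarrow>n_as . e = lam]"
    proof (rule map_idI)
      fix n assume "n \<in> set (map fst [(n, e)\<leftarrow>n_as . e = lam])"
      hence "n \<in> set (map fst n_as)" by auto
      hence "n \<le> K" unfolding K_def by (rule member_le_sum_list) simp
      thus "min (Suc K) n = n" by simp
    qed
    moreover have "[(n, e)\<leftarrow>n_as . e = lam] = filter (\<lambda> na. snd na = lam) n_as"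
      by (rule filter_cong) auto
    ultimately show ?thesis by metis
  qed
  also have "\<dots> = dim_gen_eigenspace (cmat A) lam (Suc K)" by (rule dim_gen_eigenspace[OF jnf, symmetric])
  also have "\<dots> = dim_gen_eigenspace (cmat A) lam 1" by (rule gk)
  also have "\<dots> = geom_mult (cmat A) lam"
    unfolding dim_gen_eigenspace_def geom_mult_def C_def[symmetric] C1 ..
  finally show ?thesis .
qed

end


lemma outer_carrier: "p \<in> carrier_vec N \<Longrightarrow> outer p p \<in> carrier_mat N N"
  unfolding outer_def by auto

lemma outer_sym: "p \<in> carrier_vec N \<Longrightarrow> (outer p p)\<^sup>T = outer p p"
  unfolding outer_def by (intro eq_matI) auto

lemma outer_quad:
  assumes p: "p \<in> carrier_vec N" and v: "v \<in> carrier_vec N"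
  shows "v \<bullet> (outer p p *\<^sub>v v) = (p \<bullet> v)^2"
proof -
  have "v \<bullet> (outer p p *\<^sub>v v) = (\<Sum>i\<in>{0..<N}. v $ i * (\<Sum>j\<in>{0..<N}. p $ i * p $ j * v $ j))"
    using p v unfolding outer_def by (simp add: scalar_prod_def mult_mat_vec_def)
  also have "\<dots> = (\<Sum>i\<in>{0..<N}. p $ i * v $ i) * (\<Sum>j\<in>{0..<N}. p $ j * v $ j)"
    by (simp add: sum_distrib_left sum_distrib_right algebra_simps)
  also have "\<dots> = (p \<bullet> v)^2" using p v by (simp add: scalar_prod_def power2_eq_square)
  finally show ?thesis .
qed

theorem lemma3:
  fixes n q :: nat and a b :: real
    and Dp Dm H S Hinv :: "real mat" and p0 pn x :: "real vec"
    and lam :: complex and w :: "complex vec"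
  assumes "b > a" and "n \<ge> 1" and "q \<ge> 1"
    and sbp: "SBP_pair n q a b Dp Dm H S p0 pn x"
    and Hinv: "Hinv \<in> carrier_mat (n+1) (n+1)" "H * Hinv = 1\<^sub>m (n+1)"
    and eig: "eigenvector (cmat (Dp + Hinv * outer p0 p0)) w lam"
    and re0: "Re lam = 0"
  shows "(\<forall>v u \<mu>. eigenvector (cmat (Dp + Hinv * outer p0 p0)) v lam \<longrightarrow>
                 eigenvector (cmat (Dp + Hinv * outer p0 p0)) u \<mu> \<longrightarrow> \<mu> \<noteq> lam \<longrightarrow>
                 H_inner H v u = 0)
       \<and> alg_mult (cmat (Dp + Hinv * outer p0 p0)) lam
           = geom_mult (cmat (Dp + Hinv * outer p0 p0)) lam"
proof -
  define N where "N = n + 1"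
  define P where "P = outer p0 p0"
  define Pn where "Pn = outer pn pn"
  define A where "A = Dp + Hinv * P"
  define M where "M = P + Pn + S"
  have Dp: "Dp \<in> carrier_mat N N" and H: "H \<in> carrier_mat N N" and S: "S \<in> carrier_mat N N"
    and p0: "p0 \<in> carrier_vec N" and pn: "pn \<in> carrier_vec N"
    and Hsym: "H\<^sup>T = H" and Hpd: "\<forall>v \<in> carrier_vec N. v \<noteq> 0\<^sub>v N \<longrightarrow> v \<bullet> (H *\<^sub>v v) > 0"
    and C: "H * Dp + Dp\<^sup>T * H = - P + Pn + S"
    and Ssym: "S\<^sup>T = S" and Spsd: "\<forall>v \<in> carrier_vec N. v \<bullet> (S *\<^sub>v v) \<ge> 0"
    using sbp unfolding SBP_pair_def N_def P_def Pn_def by auto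
  have Hi: "Hinv \<in> carrier_mat N N" and HHi: "H * Hinv = 1\<^sub>m N" using Hinv unfolding N_def by auto
  have P: "P \<in> carrier_mat N N" and Pn: "Pn \<in> carrier_mat N N"
    unfolding P_def Pn_def using p0 pn by (auto intro: outer_carrier)
  have Psym: "P\<^sup>T = P" and Pnsym: "Pn\<^sup>T = Pn" unfolding P_def Pn_def using p0 pn by (auto intro: outer_sym)
  have A: "A \<in> carrier_mat N N" unfolding A_def using Dp Hi P by auto
  have M: "M \<in> carrier_mat N N" unfolding M_def using P Pn S by auto
  have Msym: "M\<^sup>T = M" unfolding M_def using P Pn S Psym Pnsym Ssym by (simp add: transpose_add)
  have psd: "\<forall>v\<in>carrier_vec N. v \<bullet> (M *\<^sub>v v) \<ge> 0"
  proof
    fix v :: "real vec" assume v: "v \<in> carrier_vec N"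
    have "v \<bullet> (M *\<^sub>v v) = v \<bullet> (P *\<^sub>v v) + v \<bullet> (Pn *\<^sub>v v) + v \<bullet> (S *\<^sub>v v)"
      unfolding M_def using P Pn S v
      by (simp add: add_mult_distrib_mat_vec[of _ N N] scalar_prod_add_distrib[of _ N])
    also have "\<dots> = (p0 \<bullet> v)^2 + (pn \<bullet> v)^2 + v \<bullet> (S *\<^sub>v v)"
      unfolding P_def Pn_def using outer_quad[OF p0 v] outer_quad[OF pn v] by simp
    finally show "v \<bullet> (M *\<^sub>v v) \<ge> 0" using Spsd v by simp
  qed
  have HiH: "Hinv\<^sup>T * H = 1\<^sub>m N"
  proof -
    have "Hinv\<^sup>T * H = (H\<^sup>T * Hinv)\<^sup>T" using Hi H by (simp add: transpose_mult)
    also have "\<dots> = 1\<^sub>m N" using Hsym HHi by simp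
    finally show ?thesis .
  qed
  have e1: "H * A = H * Dp + P"
  proof -
    have "H * A = H * Dp + H * (Hinv * P)" unfolding A_def using H Dp Hi P
      by (simp add: mult_add_distrib_mat[of _ N N])
    also have "H * (Hinv * P) = (H * Hinv) * P" using H Hi P by (simp add: assoc_mult_mat[of _ N N _ N _ N])
    finally show ?thesis using HHi P by simp
  qed
  have e2: "A\<^sup>T * H = Dp\<^sup>T * H + P"
  proof -
    have "A\<^sup>T = Dp\<^sup>T + P * Hinv\<^sup>T" unfolding A_def using Dp Hi P Psym
      by (simp add: transpose_add[of _ N N] transpose_mult[of _ N N])
    hence "A\<^sup>T * H = Dp\<^sup>T * H + (P * Hinv\<^sup>T) * H" using Dp Hi P H
      by (simp add: add_mult_distrib_mat[of _ N N])
    also have "(P * Hinv\<^sup>T) * H = P * (Hinv\<^sup>T * H)" using H Hi P by (simp add: assoc_mult_mat[of _ N N _ N _ N])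
    finally show ?thesis using HiH P by simp
  qed
  have HM: "H * A + A\<^sup>T * H = M"
  proof (rule eq_matI)
    fix i j assume ij: "i < dim_row M" "j < dim_col M"
    hence ij': "i < N" "j < N" using M by auto
    have c: "(H * Dp) $$ (i,j) + (Dp\<^sup>T * H) $$ (i,j) = - P $$ (i,j) + Pn $$ (i,j) + S $$ (i,j)"
      using arg_cong[OF C, of "\<lambda>X. X $$ (i,j)"] ij' H Dp P Pn S by simp
    show "(H * A + A\<^sup>T * H) $$ (i, j) = M $$ (i, j)"
      unfolding e1 e2 M_def using c ij' H Dp P Pn S by simp
  qed (use H A M in auto)
  interpret setting N A H M lam
    by (unfold_locales) (use A H M Hsym Msym psd HM re0 in auto)
  have Hi_def: "\<And>v u. H_inner H v u = conjugate v \<bullet> (cmat H *\<^sub>v u)" unfolding H_inner_def by simp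
  show ?thesis
    unfolding A_def[unfolded P_def, symmetric] Hi_def
    using orth mult_eq[OF Hpd] by blast
qed

end
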